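(* Let $\hbar>0$ and let $f\in L^2(\mathbb{R})$ be such that the nodal set of $Wf$ is bounded and $Wf$ is centered at $z=0$. Suppose $Wf$ vanishes on the circle $|z|=R$ for some $R>0$. Then $R=\sqrt{\hbar p/2}$ where $p$ is a root of at least one Laguerre polynomial $L_n^{(k)}$ with $n\in\mathbb{N}$, $k\in\mathbb{N}_0$. Consequently, there are only countably many radii $R$ for circles centered at the origin on which such Wigner functions can vanish.
   Context: For $f,g\in L^2(\mathbb{R})$, $W(f,g)(x,p)=\frac{1}{2\pi\hbar}\int_{\mathbb{R}} f(x+\tau/2)\overline{g(x-\tau/2)}e^{-\frac{i}{\hbar}p\tau}\,d\tau$ and $Wf=W(f,f)$. Hermite functions: $h_n(x)=\frac{1}{\sqrt[4]{\pi\hbar}\sqrt{2^nn!}}e^{-x^2/(2\hbar)}H_n(x/\sqrt{\hbar})$, $H_n(x)=(-1)^ne^{x^2}\frac{d^n}{dx^n}e^{-x^2}$. A Wigner function $Wf$ with bounded nodal set is centered at $z_1$ if $Wf(z)=\sum_{n,m=0}^N b_n\overline{b_m}W(h_n,h_m)(S(z-z_1))$ for all $z$, for some $N\in\mathbb{N}_0$, $b_j\in\mathbb{C}$, and some real $2\times2$ matrix $S$ with $\det S=1$. Generalized Laguerre polynomials: $L_n^{(\alpha)}(x)=\sum_{j=0}^n(-1)^j\binom{n+\alpha}{n-j}\frac{x^j}{j!}$. *)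

theory Defs
  imports "HOL-Analysis.Analysis"
begin

text \<open>Phase-space points z = (x,p) are vectors in real^2 with x = z$1, p = z$2.\<close>

definition cross_wigner ::
  "real \<Rightarrow> (real \<Rightarrow> complex) \<Rightarrow> (real \<Rightarrow> complex) \<Rightarrow> real^2 \<Rightarrow> complex" where
  "cross_wigner hb f g z =
     complex_of_real (1 / (2 * pi * hb)) *
     integral\<^sup>L lborel (\<lambda>\<tau>. f (z$1 + \<tau>/2) * cnj (g (z$1 - \<tau>/2))
                              * cis (- (z$2 * \<tau>) / hb))"

definition wigner :: "real \<Rightarrow> (real \<Rightarrow> complex) \<Rightarrow> real^2 \<Rightarrow> complex" where
  "wigner hb f = cross_wigner hb f f"

definition square_integrable :: "(real \<Rightarrow> complex) \<Rightarrow> bool" where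
  "square_integrable f \<longleftrightarrow>
     f \<in> borel_measurable lborel \<and> integrable lborel (\<lambda>x. (norm (f x))^2)"

definition hermite_poly :: "nat \<Rightarrow> real \<Rightarrow> real" where
  "hermite_poly n x = (-1)^n * exp (x^2) * (deriv ^^ n) (\<lambda>t. exp (- (t^2))) x"

definition hermite_fun :: "real \<Rightarrow> nat \<Rightarrow> real \<Rightarrow> complex" where
  "hermite_fun hb n x = complex_of_real
     (1 / (root 4 (pi * hb) * sqrt (2^n * fact n)) * exp (- (x^2) / (2 * hb))
      * hermite_poly n (x / sqrt hb))"

definition nodal_set :: "(real^2 \<Rightarrow> complex) \<Rightarrow> (real^2) set" where
  "nodal_set F = {z. F z = 0}"

definition centered_at :: "real \<Rightarrow> (real \<Rightarrow> complex) \<Rightarrow> real^2 \<Rightarrow> bool" where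
  "centered_at hb f z1 \<longleftrightarrow>
     (\<exists>(N::nat) (b::nat \<Rightarrow> complex) (S::real^2^2). det S = 1 \<and>
        (\<forall>z. wigner hb f z =
              (\<Sum>n\<le>N. \<Sum>m\<le>N. b n * cnj (b m) *
                 cross_wigner hb (hermite_fun hb n) (hermite_fun hb m) (S *v (z - z1)))))"

definition gen_laguerre :: "nat \<Rightarrow> nat \<Rightarrow> real \<Rightarrow> real" where
  "gen_laguerre n \<alpha> x = (\<Sum>j\<le>n. (-1)^j * real ((n + \<alpha>) choose (n - j)) * x^j / fact j)"

end

theory Submission
  imports Defs "HOL-Real_Asymp.Real_Asymp" "HOL-Probability.Probability" "HOL-Computational_Algebra.Polynomial"
begin

fun Hp :: "nat \<Rightarrow> real \<Rightarrow> real" where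
  "Hp 0 x = 1"
| "Hp (Suc 0) x = 2 * x"
| "Hp (Suc (Suc n)) x = 2 * x * Hp (Suc n) x - 2 * real (Suc n) * Hp n x"

lemma Hp_rec: "Hp (Suc n) x = 2 * x * Hp n x - 2 * real n * Hp (n - 1) x"
  by (cases n) auto

lemma Hp_deriv: "(Hp n has_real_derivative (2 * real n * Hp (n - 1) x)) (at x)"
proof (induction n x rule: Hp.induct)
  case (1 x) then show ?case by (auto intro!: derivative_eq_intros)
next
  case (2 x) then show ?case by (auto intro!: derivative_eq_intros)
next
  case (3 n x)
  have "((\<lambda>x. 2 * x * Hp (Suc n) x - 2 * real (Suc n) * Hp n x) has_real_derivative
     (2 * Hp (Suc n) x + 2 * x * (2 * real (Suc n) * Hp n x) - 2 * real (Suc n) * (2 * real n * Hp (n - 1) x))) (at x)"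
    by (auto intro!: derivative_eq_intros 3)
  moreover have "2 * Hp (Suc n) x + 2 * x * (2 * real (Suc n) * Hp n x) - 2 * real (Suc n) * (2 * real n * Hp (n - 1) x)
     = 2 * real (Suc (Suc n)) * Hp (Suc (Suc n) - 1) x"
    by (simp only: Hp_rec diff_Suc_1) (simp add: algebra_simps)
  ultimately show ?case by (simp add: fun_eq_iff)
qed

lemma deriv_gauss_pow: "(deriv ^^ n) (\<lambda>t. exp (- (t^2))) = (\<lambda>t. (-1)^n * Hp n t * exp (- (t^2)))"
proof (induction n)
  case 0 then show ?case by simp
next
  case (Suc n)
  have "deriv (\<lambda>t. (-1)^n * Hp n t * exp (- (t^2))) x = (-1)^Suc n * Hp (Suc n) x * exp (- (x^2))" for x
  proof (rule DERIV_imp_deriv)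
    have "((\<lambda>t. (-1)^n * Hp n t * exp (- (t^2))) has_real_derivative
       (-1)^n * (2 * real n * Hp (n - 1) x) * exp (- (x^2)) + (-1)^n * Hp n x * (exp (- (x^2)) * (- (2 * x)))) (at x)"
      by (auto intro!: derivative_eq_intros Hp_deriv)
    then show "((\<lambda>t. (-1)^n * Hp n t * exp (- (t^2))) has_real_derivative
       (-1)^Suc n * Hp (Suc n) x * exp (- (x^2))) (at x)"
      by (simp only: Hp_rec) (simp add: algebra_simps)
  qed
  then show ?case using Suc by (simp del: power_Suc)
qed

lemma hermite_poly_Hp: "hermite_poly n x = Hp n x"
  unfolding hermite_poly_def deriv_gauss_pow
  by (simp add: exp_minus field_simps power_mult_distrib[symmetric] flip: power_add)


definition pbound :: "(real \<Rightarrow> 'a::real_normed_vector) \<Rightarrow> bool" where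
  "pbound g \<longleftrightarrow> (\<exists>K N. \<forall>u. norm (g u) \<le> K * (1 + \<bar>u\<bar>)^N)"

lemma pboundI: "(\<And>u. norm (g u) \<le> K * (1 + \<bar>u\<bar>)^N) \<Longrightarrow> pbound g"
  unfolding pbound_def by blast

lemma pbound_const: "pbound (\<lambda>u. c)"
  by (rule pboundI[where K="norm c" and N=0]) simp

lemma pbound_id: "pbound (\<lambda>u. complex_of_real u)"
  by (rule pboundI[where K=1 and N=1]) simp

lemma pbound_cis: "pbound (\<lambda>u. cis (f u))"
  by (rule pboundI[where K=1 and N=0]) simp

lemma pbound_mult:
  fixes f g :: "real \<Rightarrow> 'a::real_normed_algebra"
  assumes "pbound f" "pbound g" shows "pbound (\<lambda>u. f u * g u)"
proof -
  obtain K1 N1 where 1: "\<And>u. norm (f u) \<le> K1 * (1 + \<bar>u\<bar>)^N1" using assms(1) unfolding pbound_def by blast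
  obtain K2 N2 where 2: "\<And>u. norm (g u) \<le> K2 * (1 + \<bar>u\<bar>)^N2" using assms(2) unfolding pbound_def by blast
  show ?thesis
  proof (rule pboundI[where K="K1*K2" and N="N1+N2"])
    fix u :: real
    have "norm (f u * g u) \<le> norm (f u) * norm (g u)" by (rule norm_mult_ineq)
    also have "\<dots> \<le> (K1 * (1 + \<bar>u\<bar>)^N1) * (K2 * (1 + \<bar>u\<bar>)^N2)"
      by (intro mult_mono 1 2) (auto intro: order_trans[OF norm_ge_zero 1])
    finally show "norm (f u * g u) \<le> K1 * K2 * (1 + \<bar>u\<bar>)^(N1+N2)"
      by (simp add: power_add algebra_simps)
  qed
qed

lemma pbound_add:
  fixes f g :: "real \<Rightarrow> 'a::real_normed_vector"
  assumes "pbound f" "pbound g" shows "pbound (\<lambda>u. f u + g u)"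
proof -
  obtain K1 N1 where 1: "\<And>u. norm (f u) \<le> K1 * (1 + \<bar>u\<bar>)^N1" using assms(1) unfolding pbound_def by blast
  obtain K2 N2 where 2: "\<And>u. norm (g u) \<le> K2 * (1 + \<bar>u\<bar>)^N2" using assms(2) unfolding pbound_def by blast
  have "norm (f 0) \<le> K1" using 1[of 0] by simp
  then have K1: "K1 \<ge> 0" using norm_ge_zero[of "f 0"] by linarith
  have "norm (g 0) \<le> K2" using 2[of 0] by simp
  then have K2: "K2 \<ge> 0" using norm_ge_zero[of "g 0"] by linarith
  show ?thesis
  proof (rule pboundI[where K="K1+K2" and N="N1+N2"])
    fix u :: real
    have a: "(1 + \<bar>u\<bar>)^N1 \<le> (1 + \<bar>u\<bar>)^(N1+N2)" by (rule power_increasing) auto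
    have b: "(1 + \<bar>u\<bar>)^N2 \<le> (1 + \<bar>u\<bar>)^(N1+N2)" by (rule power_increasing) auto
    have "norm (f u + g u) \<le> norm (f u) + norm (g u)" by (rule norm_triangle_ineq)
    also have "\<dots> \<le> K1 * (1 + \<bar>u\<bar>)^(N1+N2) + K2 * (1 + \<bar>u\<bar>)^(N1+N2)"
      using 1[of u] 2[of u] mult_left_mono[OF a K1] mult_left_mono[OF b K2] by linarith
    finally show "norm (f u + g u) \<le> (K1 + K2) * (1 + \<bar>u\<bar>)^(N1+N2)"
      by (simp add: algebra_simps)
  qed
qed

lemma pbound_cmult:
  fixes g :: "real \<Rightarrow> 'a::real_normed_algebra"
  shows "pbound g \<Longrightarrow> pbound (\<lambda>u. c * g u)"
  using pbound_mult[OF pbound_const] by blast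

lemma pbound_diff:
  fixes f g :: "real \<Rightarrow> 'a::real_normed_algebra_1"
  assumes "pbound f" "pbound g" shows "pbound (\<lambda>u. f u - g u)"
  using pbound_add[OF assms(1) pbound_cmult[OF assms(2), of "-1"]] by simp

lemma Hp_bound_aux:
  fixes x :: real
  shows "\<exists>C. \<forall>y. \<bar>Hp n y\<bar> \<le> C * (1 + \<bar>y\<bar>)^n"
proof (induction n x rule: Hp.induct)
  case (1 x) then show ?case by (intro exI[of _ 1]) simp
next
  case (2 x) then show ?case by (intro exI[of _ 2]) (simp add: abs_mult)
next
  case (3 n x)
  obtain C1 where C1: "\<And>y. \<bar>Hp (Suc n) y\<bar> \<le> C1 * (1 + \<bar>y\<bar>)^(Suc n)" using 3(1) by blast
  obtain C0 where C0: "\<And>y. \<bar>Hp n y\<bar> \<le> C0 * (1 + \<bar>y\<bar>)^n" using 3(2) by blast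
  have "\<bar>Hp (Suc n) 0\<bar> \<le> C1" using C1[of 0] by simp
  then have C1p: "C1 \<ge> 0" by linarith
  have "\<bar>Hp n 0\<bar> \<le> C0" using C0[of 0] by simp
  then have C0p: "C0 \<ge> 0" by linarith
  show ?case
  proof (intro exI[of _ "2 * C1 + 2 * real (Suc n) * C0"] allI)
    fix y :: real
    have p1: "(1 + \<bar>y\<bar>)^n \<le> (1 + \<bar>y\<bar>)^(Suc (Suc n))" by (rule power_increasing) auto
    have "\<bar>Hp (Suc (Suc n)) y\<bar> \<le> 2 * \<bar>y\<bar> * \<bar>Hp (Suc n) y\<bar> + 2 * real (Suc n) * \<bar>Hp n y\<bar>"
    proof -
      have "\<bar>Hp (Suc (Suc n)) y\<bar> \<le> \<bar>2 * y * Hp (Suc n) y\<bar> + \<bar>2 * real (Suc n) * Hp n y\<bar>"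
        unfolding Hp.simps by (rule abs_triangle_ineq4)
      also have "\<dots> = 2 * \<bar>y\<bar> * \<bar>Hp (Suc n) y\<bar> + 2 * real (Suc n) * \<bar>Hp n y\<bar>"
        by (simp add: abs_mult)
      finally show ?thesis .
    qed
    also have "\<dots> \<le> 2 * (1 + \<bar>y\<bar>) * (C1 * (1 + \<bar>y\<bar>)^(Suc n)) + 2 * real (Suc n) * (C0 * (1 + \<bar>y\<bar>)^(Suc (Suc n)))"
      apply (intro add_mono mult_mono C1 order_trans[OF C0] mult_left_mono[OF p1 C0p])
      using C1p C0p by (auto simp: algebra_simps)
    also have "\<dots> = (2 * C1 + 2 * real (Suc n) * C0) * (1 + \<bar>y\<bar>) ^ Suc (Suc n)"
      by (simp add: algebra_simps)
    finally show "\<bar>Hp (Suc (Suc n)) y\<bar> \<le> (2 * C1 + 2 * real (Suc n) * C0) * (1 + \<bar>y\<bar>) ^ Suc (Suc n)" .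
  qed
qed

lemmas Hp_bound = Hp_bound_aux

lemma pbound_Hp:
  assumes "\<bar>r\<bar> \<le> 1"
  shows "pbound (\<lambda>u. complex_of_real (Hp n (X + r * u)))"
proof -
  obtain C where C: "\<And>y. \<bar>Hp n y\<bar> \<le> C * (1 + \<bar>y\<bar>)^n" using Hp_bound by blast
  have "\<bar>Hp n 0\<bar> \<le> C" using C[of 0] by simp
  then have Cp: "C \<ge> 0" by linarith
  show ?thesis
  proof (rule pboundI[where K="C * (1 + \<bar>X\<bar>)^n" and N=n])
    fix u :: real
    have "1 + \<bar>X + r * u\<bar> \<le> (1 + \<bar>X\<bar>) * (1 + \<bar>u\<bar>)"
    proof -
      have "\<bar>r * u\<bar> \<le> \<bar>u\<bar>" using assms by (simp add: abs_mult mult_left_le_one_le)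
      then show ?thesis by (simp add: algebra_simps) (smt (verit) abs_ge_zero abs_triangle_ineq mult_nonneg_nonneg)
    qed
    then have "(1 + \<bar>X + r * u\<bar>)^n \<le> ((1 + \<bar>X\<bar>) * (1 + \<bar>u\<bar>))^n"
      by (intro power_mono) auto
    then have "C * (1 + \<bar>X + r * u\<bar>)^n \<le> C * ((1 + \<bar>X\<bar>) * (1 + \<bar>u\<bar>))^n"
      using Cp by (rule mult_left_mono)
    then show "norm (complex_of_real (Hp n (X + r * u))) \<le> C * (1 + \<bar>X\<bar>)^n * (1 + \<bar>u\<bar>)^n"
      using C[of "X + r * u"] by (simp add: power_mult_distrib mult.assoc)
  qed
qed

definition phi :: "real \<Rightarrow> real" where "phi u = exp (- (u^2) / 2)"

lemma phi_pos: "phi u > 0" unfolding phi_def by simp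

lemma integrable_phi_pow: "integrable lborel (\<lambda>u. phi u * (1 + \<bar>u\<bar>)^N)"
proof -
  have eq: "(\<lambda>u. phi u * (1 + \<bar>u\<bar>)^N) = (\<lambda>u. \<Sum>k\<le>N. (real (N choose k) * sqrt (2 * pi)) * (std_normal_density u * \<bar>u\<bar>^k))"
  proof
    fix u :: real
    have "(1 + \<bar>u\<bar>)^N = (\<Sum>k\<le>N. real (N choose k) * \<bar>u\<bar>^k)"
      using binomial_ring[of "\<bar>u\<bar>" 1 N] by (simp add: add.commute mult.commute)
    then show "phi u * (1 + \<bar>u\<bar>)^N = (\<Sum>k\<le>N. (real (N choose k) * sqrt (2 * pi)) * (std_normal_density u * \<bar>u\<bar>^k))"
      by (simp add: phi_def std_normal_density_def sum_distrib_left algebra_simps)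
  qed
  show ?thesis unfolding eq
    by (intro Bochner_Integration.integrable_sum integrable_mult_right integrable_std_normal_moment_abs)
qed

lemma integrable_phi_pbound:
  fixes g :: "real \<Rightarrow> complex"
  assumes "pbound g" "continuous_on UNIV g"
  shows "integrable lborel (\<lambda>u. complex_of_real (phi u) * g u)"
proof -
  obtain K N where KN: "\<And>u. norm (g u) \<le> K * (1 + \<bar>u\<bar>)^N" using assms(1) unfolding pbound_def by blast
  show ?thesis
  proof (rule Bochner_Integration.integrable_bound)
    show "integrable lborel (\<lambda>u. K * (phi u * (1 + \<bar>u\<bar>)^N))"
      by (intro integrable_mult_right integrable_phi_pow)
    show "(\<lambda>u. complex_of_real (phi u) * g u) \<in> borel_measurable lborel"
    proof -
      have "continuous_on UNIV (\<lambda>u. complex_of_real (phi u) * g u)"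
        unfolding phi_def by (intro continuous_intros assms(2)) auto
      then show ?thesis by (simp add: borel_measurable_continuous_onI)
    qed
    show "AE u in lborel. norm (complex_of_real (phi u) * g u) \<le> norm (K * (phi u * (1 + \<bar>u\<bar>)^N))"
    proof (intro AE_I2)
      fix u
      have "norm (complex_of_real (phi u) * g u) = phi u * norm (g u)"
        using phi_pos[of u] by (simp add: norm_mult)
      also have "\<dots> \<le> phi u * (K * (1 + \<bar>u\<bar>)^N)" using KN phi_pos[of u] by (intro mult_left_mono) auto
      also have "\<dots> \<le> norm (K * (phi u * (1 + \<bar>u\<bar>)^N))" by (simp add: algebra_simps)
      finally show "norm (complex_of_real (phi u) * g u) \<le> norm (K * (phi u * (1 + \<bar>u\<bar>)^N))" .
    qed
  qed
qed

lemma phi_pbound_tendsto: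
  fixes g :: "real \<Rightarrow> complex"
  assumes "pbound g"
  shows "((\<lambda>u. complex_of_real (phi u) * g u) \<longlongrightarrow> 0) at_top"
    and "((\<lambda>u. complex_of_real (phi u) * g u) \<longlongrightarrow> 0) at_bot"
proof -
  obtain K N where KN: "\<And>u. norm (g u) \<le> K * (1 + \<bar>u\<bar>)^N" using assms(1) unfolding pbound_def by blast
  have b: "norm (complex_of_real (phi u) * g u) \<le> K * (exp (- (u^2) / 2) * (1 + \<bar>u\<bar>)^N)" for u
  proof -
    have "norm (complex_of_real (phi u) * g u) = phi u * norm (g u)"
      using phi_pos[of u] by (simp add: norm_mult)
    also have "\<dots> \<le> phi u * (K * (1 + \<bar>u\<bar>)^N)" using KN phi_pos[of u] by (intro mult_left_mono) auto
    finally show ?thesis by (simp add: phi_def algebra_simps)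
  qed
  have t1: "((\<lambda>u::real. exp (- (u^2) / 2) * (1 + \<bar>u\<bar>)^N) \<longlongrightarrow> 0) at_top" by real_asymp
  have t2: "((\<lambda>u::real. exp (- (u^2) / 2) * (1 + \<bar>u\<bar>)^N) \<longlongrightarrow> 0) at_bot" by real_asymp
  show "((\<lambda>u. complex_of_real (phi u) * g u) \<longlongrightarrow> 0) at_top"
    by (rule Lim_null_comparison[OF always_eventually[OF allI[OF b]]])
       (use tendsto_mult_right_zero[OF t1, of K] in simp)
  show "((\<lambda>u. complex_of_real (phi u) * g u) \<longlongrightarrow> 0) at_bot"
    by (rule Lim_null_comparison[OF always_eventually[OF allI[OF b]]])
       (use tendsto_mult_right_zero[OF t2, of K] in simp)
qed


lemma Hp_cont: "continuous_on UNIV (Hp n)"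
  using Hp_deriv by (metis DERIV_isCont continuous_at_imp_continuous_on)

lemma Hp_cont_comp[continuous_intros]: "continuous_on S f \<Longrightarrow> continuous_on S (\<lambda>x. Hp n (f x))"
  using continuous_on_compose2[OF Hp_cont, of S f] by auto

lemma cis_vderiv: "((\<lambda>u. cis (k * u)) has_vector_derivative (\<i> * complex_of_real k * cis (k * u))) (at u)"
proof -
  have "((\<lambda>z. exp (\<i> * complex_of_real k * z)) has_field_derivative (\<i> * complex_of_real k * exp (\<i> * complex_of_real k * complex_of_real u))) (at (complex_of_real u))"
    by (auto intro!: derivative_eq_intros)
  from has_vector_derivative_real_field[OF this]
  show ?thesis by (simp add: cis_conv_exp mult.assoc)
qed

lemma full_line_FTC:
  fixes F f :: "real \<Rightarrow> complex"
  assumes "\<And>x. (F has_vector_derivative f x) (at x)"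
    and "\<And>x. isCont f x"
    and "integrable lborel f"
    and "(F \<longlongrightarrow> 0) at_top" "(F \<longlongrightarrow> 0) at_bot"
  shows "integral\<^sup>L lborel f = 0"
proof -
  have "(LBINT x=-\<infinity>..\<infinity>. f x) = 0 - 0"
    by (rule interval_integral_FTC_integrable[where F=F])
       (use assms in \<open>auto simp: ereal_tendsto_simps set_integrable_def einterval_def\<close>)
  then show ?thesis
    by (simp add: interval_lebesgue_integral_def einterval_def set_lebesgue_integral_def)
qed

definition Jg :: "(real \<Rightarrow> complex) \<Rightarrow> complex" where
  "Jg g = integral\<^sup>L lborel (\<lambda>u. complex_of_real (phi u) * g u)"

lemma phi_deriv: "(phi has_real_derivative (- u * phi u)) (at u)"
  unfolding phi_def by (auto intro!: derivative_eq_intros simp: power2_eq_square)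

lemma IBP:
  fixes A A' :: "real \<Rightarrow> real"
  assumes d: "\<And>u. (A has_real_derivative A' u) (at u)"
    and c: "continuous_on UNIV A'"
    and pA: "pbound (\<lambda>u. complex_of_real (A u))" and pA': "pbound (\<lambda>u. complex_of_real (A' u))"
  shows "Jg (\<lambda>u. complex_of_real u * complex_of_real (A u) * cis (k * u)) =
         Jg (\<lambda>u. complex_of_real (A' u) * cis (k * u)) + \<i> * complex_of_real k * Jg (\<lambda>u. complex_of_real (A u) * cis (k * u))"
proof -
  have cA: "continuous_on UNIV A"
    using d by (metis DERIV_isCont continuous_at_imp_continuous_on)
  define F where "F u = complex_of_real (phi u) * (complex_of_real (A u) * cis (k * u))" for u
  define g1 where "g1 u = complex_of_real u * complex_of_real (A u) * cis (k * u)" for u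
  define g2 where "g2 u = complex_of_real (A' u) * cis (k * u)" for u
  define g3 where "g3 u = complex_of_real (A u) * cis (k * u)" for u
  define f where "f u = complex_of_real (phi u) * g2 u + \<i> * complex_of_real k * (complex_of_real (phi u) * g3 u)
     - complex_of_real (phi u) * g1 u" for u
  have pb1: "pbound g1" unfolding g1_def by (intro pbound_mult pbound_id pA pbound_cis)
  have pb2: "pbound g2" unfolding g2_def by (intro pbound_mult pA' pbound_cis)
  have pb3: "pbound g3" unfolding g3_def by (intro pbound_mult pA pbound_cis)
  have ccis: "continuous_on UNIV (\<lambda>u. cis (k * u))"
    unfolding cis_conv_exp by (intro continuous_intros)
  have c1: "continuous_on UNIV g1" unfolding g1_def
    by (intro continuous_intros ccis continuous_on_of_real cA)
  have c2: "continuous_on UNIV g2" unfolding g2_def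
    by (intro continuous_intros ccis continuous_on_of_real c)
  have c3: "continuous_on UNIV g3" unfolding g3_def
    by (intro continuous_intros ccis continuous_on_of_real cA)
  have i1: "integrable lborel (\<lambda>u. complex_of_real (phi u) * g1 u)" by (rule integrable_phi_pbound[OF pb1 c1])
  have i2: "integrable lborel (\<lambda>u. complex_of_real (phi u) * g2 u)" by (rule integrable_phi_pbound[OF pb2 c2])
  have i3: "integrable lborel (\<lambda>u. complex_of_real (phi u) * g3 u)" by (rule integrable_phi_pbound[OF pb3 c3])
  have "integral\<^sup>L lborel f = 0"
  proof (rule full_line_FTC[where F=F])
    fix x
    have "((\<lambda>u. complex_of_real (phi u) * (complex_of_real (A u) * cis (k * u))) has_vector_derivative
       (complex_of_real (phi x) * (complex_of_real (A x) * (\<i> * complex_of_real k * cis (k * x)) + complex_of_real (A' x) * cis (k * x))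
        + complex_of_real (- x * phi x) * (complex_of_real (A x) * cis (k * x)))) (at x)"
      by (intro has_vector_derivative_mult has_vector_derivative_of_real phi_deriv d cis_vderiv)
    then show "(F has_vector_derivative f x) (at x)"
      unfolding F_def f_def g1_def g2_def g3_def
      by (rule has_vector_derivative_eq_rhs) (simp add: algebra_simps)
    have "continuous_on UNIV f" unfolding f_def phi_def
      by (intro continuous_intros c1 c2 c3) auto
    then show "isCont f x" by (simp add: continuous_on_eq_continuous_at)
  next
    show "integrable lborel f" unfolding f_def
      by (intro Bochner_Integration.integrable_diff Bochner_Integration.integrable_add integrable_mult_right i1 i2 i3)
    show "(F \<longlongrightarrow> 0) at_top" unfolding F_def using phi_pbound_tendsto(1)[OF pb3] g3_def by simp
    show "(F \<longlongrightarrow> 0) at_bot" unfolding F_def using phi_pbound_tendsto(2)[OF pb3] g3_def by simp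
  qed
  moreover have "integral\<^sup>L lborel f = Jg g2 + \<i> * complex_of_real k * Jg g3 - Jg g1"
    unfolding f_def Jg_def using i1 i2 i3
    by (simp add: Bochner_Integration.integral_diff Bochner_Integration.integral_add)
  ultimately show ?thesis unfolding g1_def g2_def g3_def by (simp add: algebra_simps)
qed


definition good :: "(real \<Rightarrow> complex) \<Rightarrow> bool" where
  "good g \<longleftrightarrow> pbound g \<and> continuous_on UNIV g"

lemma good_int: "good g \<Longrightarrow> integrable lborel (\<lambda>u. complex_of_real (phi u) * g u)"
  unfolding good_def using integrable_phi_pbound by blast

lemma Jg_add: "good f \<Longrightarrow> good g \<Longrightarrow> Jg (\<lambda>u. f u + g u) = Jg f + Jg g"
  unfolding Jg_def using good_int[of f] good_int[of g]
  by (simp add: distrib_left Bochner_Integration.integral_add)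

lemma Jg_diff: "good f \<Longrightarrow> good g \<Longrightarrow> Jg (\<lambda>u. f u - g u) = Jg f - Jg g"
  unfolding Jg_def using good_int[of f] good_int[of g]
  by (simp add: right_diff_distrib Bochner_Integration.integral_diff)

lemma Jg_cmult: "Jg (\<lambda>u. c * f u) = c * Jg f"
  unfolding Jg_def
  by (simp add: mult.left_commute[of _ c])

lemma good_add: "good f \<Longrightarrow> good g \<Longrightarrow> good (\<lambda>u. f u + g u)"
  unfolding good_def by (auto intro: pbound_add continuous_intros)
lemma good_diff: "good f \<Longrightarrow> good g \<Longrightarrow> good (\<lambda>u. f u - g u)"
  unfolding good_def by (auto intro: pbound_diff continuous_intros)
lemma good_mult: "good f \<Longrightarrow> good g \<Longrightarrow> good (\<lambda>u. f u * g u)"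
  unfolding good_def by (auto intro: pbound_mult continuous_intros)
lemma good_const: "good (\<lambda>u. c)"
  unfolding good_def by (auto intro: pbound_const continuous_intros)
lemma good_id: "good (\<lambda>u. complex_of_real u)"
  unfolding good_def by (auto intro: pbound_id continuous_intros)
lemma good_cis: "good (\<lambda>u. cis (k * u))"
proof -
  have "continuous_on UNIV (\<lambda>u. cis (k * u))"
    unfolding cis_conv_exp by (intro continuous_intros)
  then show ?thesis unfolding good_def using pbound_cis by blast
qed
lemma good_cis2: "good (\<lambda>u. cis (- (k * u)))"
  using good_cis[of "- k"] by simp
lemma good_cmult: "good f \<Longrightarrow> good (\<lambda>u. c * f u)"
  by (rule good_mult[OF good_const])

definition rr :: real where "rr = 1 / sqrt 2"

lemma rr_sq: "rr * rr = 1/2" unfolding rr_def by (simp add: divide_simps)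
lemma rr_rr: "rr * (rr * x) = x / 2" using rr_sq by (simp add: mult.assoc[symmetric])
lemma rr_abs: "\<bar>rr\<bar> \<le> 1" unfolding rr_def by (simp add: divide_simps)
lemma rr_abs': "\<bar>- rr\<bar> \<le> 1" unfolding rr_def by (simp add: divide_simps)

definition AA :: "nat \<Rightarrow> nat \<Rightarrow> real \<Rightarrow> real \<Rightarrow> real" where
  "AA n m X u = Hp n (X + rr * u) * Hp m (X + (- rr) * u)"

definition J :: "nat \<Rightarrow> nat \<Rightarrow> real \<Rightarrow> real \<Rightarrow> complex" where
  "J n m X P = Jg (\<lambda>u. complex_of_real (AA n m X u) * cis ((- 2 * rr * P) * u))"

lemma pbound_AA: "pbound (\<lambda>u. complex_of_real (AA n m X u))"
  unfolding AA_def of_real_mult by (rule pbound_mult[OF pbound_Hp[OF rr_abs] pbound_Hp[OF rr_abs']])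

lemma good_AA: "good (\<lambda>u. complex_of_real (AA n m X u))"
proof -
  have "continuous_on UNIV (\<lambda>u. complex_of_real (AA n m X u))"
    unfolding AA_def by (intro continuous_intros)
  then show ?thesis unfolding good_def using pbound_AA by blast
qed

lemma AA_deriv: "(AA n m X has_real_derivative
   (2 * rr * real n * AA (n - 1) m X u - 2 * rr * real m * AA n (m - 1) X u)) (at u)"
proof -
  have h1: "((\<lambda>u. Hp n (X + rr * u)) has_real_derivative (2 * real n * Hp (n - 1) (X + rr * u) * rr)) (at u)"
    by (rule DERIV_chain2[OF Hp_deriv]) (auto intro!: derivative_eq_intros)
  have h2: "((\<lambda>u. Hp m (X + (- rr) * u)) has_real_derivative (2 * real m * Hp (m - 1) (X + (- rr) * u) * (- rr))) (at u)"
    by (rule DERIV_chain2[OF Hp_deriv]) (auto intro!: derivative_eq_intros)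
  show ?thesis unfolding AA_def
    by (rule DERIV_cong[OF DERIV_mult[OF h1 h2]]) (simp add: algebra_simps)
qed

lemma J_IBP: "Jg (\<lambda>u. complex_of_real u * complex_of_real (AA n m X u) * cis ((- 2 * rr * P) * u)) =
     2 * rr * real n * J (n - 1) m X P - 2 * rr * real m * J n (m - 1) X P + \<i> * (- 2 * rr * P) * J n m X P"
proof -
  let ?k = "- 2 * rr * P"
  let ?c = "\<lambda>u. cis (?k * u)"
  show ?thesis
  proof -
    have "Jg (\<lambda>u. complex_of_real u * complex_of_real (AA n m X u) * ?c u) =
      Jg (\<lambda>u. complex_of_real (2 * rr * real n * AA (n - 1) m X u - 2 * rr * real m * AA n (m - 1) X u) * ?c u)
      + \<i> * ?k * J n m X P"
      unfolding J_def
    proof (rule IBP[OF AA_deriv])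
      show "continuous_on UNIV (\<lambda>u. 2 * rr * real n * AA (n - 1) m X u - 2 * rr * real m * AA n (m - 1) X u)"
        by (auto intro!: continuous_intros simp: AA_def)
      show "pbound (\<lambda>u. complex_of_real (AA n m X u))" by (rule pbound_AA)
      show "pbound (\<lambda>u. complex_of_real (2 * rr * real n * AA (n - 1) m X u - 2 * rr * real m * AA n (m - 1) X u))"
        unfolding of_real_diff of_real_mult
        by (intro pbound_diff pbound_cmult pbound_AA)
    qed
    also have "Jg (\<lambda>u. complex_of_real (2 * rr * real n * AA (n - 1) m X u - 2 * rr * real m * AA n (m - 1) X u) * ?c u)
       = 2 * rr * real n * J (n - 1) m X P - 2 * rr * real m * J n (m - 1) X P"
    proof -
      have "Jg (\<lambda>u. complex_of_real (2 * rr * real n * AA (n - 1) m X u - 2 * rr * real m * AA n (m - 1) X u) * ?c u)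
        = Jg (\<lambda>u. (2 * rr * real n) * (complex_of_real (AA (n - 1) m X u) * ?c u) - (2 * rr * real m) * (complex_of_real (AA n (m - 1) X u) * ?c u))"
        by (simp add: algebra_simps)
      also have "\<dots> = 2 * rr * real n * J (n - 1) m X P - 2 * rr * real m * J n (m - 1) X P"
        unfolding J_def
        by (subst Jg_diff) (auto intro!: good_cmult good_mult good_AA good_cis good_cis2 simp: Jg_cmult)
      finally show ?thesis .
    qed
    finally show ?thesis .
  qed
qed

lemma J_R1: "J (Suc n) m X P = 2 * Complex X (- P) * J n m X P - 2 * real m * J n (m - 1) X P"
proof -
  let ?k = "- 2 * rr * P"
  let ?c = "\<lambda>u. cis (?k * u)"
  note IBP' = J_IBP[of n m X P]
  have eq: "(\<lambda>u. complex_of_real (AA (Suc n) m X u) * ?c u) =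
    (\<lambda>u. (2 * X) * (complex_of_real (AA n m X u) * ?c u) + (2 * rr) * (complex_of_real u * complex_of_real (AA n m X u) * ?c u)
       - (2 * real n) * (complex_of_real (AA (n - 1) m X u) * ?c u))"
    by (rule ext) (simp add: AA_def Hp_rec algebra_simps)
  have "J (Suc n) m X P = 2 * X * J n m X P + 2 * rr * Jg (\<lambda>u. complex_of_real u * complex_of_real (AA n m X u) * ?c u)
       - 2 * real n * J (n - 1) m X P"
    unfolding J_def eq
    by (subst Jg_diff Jg_add, (auto intro!: good_cmult good_mult good_AA good_cis good_cis2 good_id good_add)[2])+
       (simp add: Jg_cmult)
  also have "\<dots> = 2 * Complex X (- P) * J n m X P - 2 * real m * J n (m - 1) X P"
    unfolding IBP'
    by (simp add: algebra_simps complex_eq_iff rr_rr) 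
  finally show ?thesis .
qed

lemma J_R2: "J n (Suc m) X P = 2 * Complex X P * J n m X P - 2 * real n * J (n - 1) m X P"
proof -
  let ?k = "- 2 * rr * P"
  let ?c = "\<lambda>u. cis (?k * u)"
  note IBP' = J_IBP[of n m X P]
  have eq: "(\<lambda>u. complex_of_real (AA n (Suc m) X u) * ?c u) =
    (\<lambda>u. (2 * X) * (complex_of_real (AA n m X u) * ?c u) - (2 * rr) * (complex_of_real u * complex_of_real (AA n m X u) * ?c u)
       - (2 * real m) * (complex_of_real (AA n (m - 1) X u) * ?c u))"
    by (rule ext) (simp add: AA_def Hp_rec algebra_simps)
  have "J n (Suc m) X P = 2 * X * J n m X P - 2 * rr * Jg (\<lambda>u. complex_of_real u * complex_of_real (AA n m X u) * ?c u)
       - 2 * real m * J n (m - 1) X P"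
    unfolding J_def eq
    by (subst Jg_diff, (auto intro!: good_cmult good_mult good_AA good_cis good_cis2 good_id good_add good_diff)[2])+
       (simp add: Jg_cmult)
  also have "\<dots> = 2 * Complex X P * J n m X P - 2 * real n * J (n - 1) m X P"
    unfolding IBP'
    by (simp add: algebra_simps complex_eq_iff rr_rr)
  finally show ?thesis .
qed

lemma J_00: "J 0 0 X P = complex_of_real (sqrt (2 * pi) * exp (- (P^2)))"
proof -
  let ?t = "- 2 * rr * P"
  have m: "(\<lambda>x. iexp (?t * x)) \<in> borel_measurable lborel"
  proof -
    have "continuous_on UNIV (\<lambda>x. iexp (?t * x))" by (intro continuous_intros)
    then show ?thesis by (simp add: borel_measurable_continuous_onI)
  qed
  have "char std_normal_distribution ?t = complex_of_real (exp (- (?t^2) / 2))"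
    by (simp add: char_std_normal_distribution)
  moreover have "char std_normal_distribution ?t = integral\<^sup>L lborel (\<lambda>x. std_normal_density x *\<^sub>R iexp (?t * x))"
    unfolding char_def
    by (rule integral_density) (use m in auto)
  moreover have "?t^2 / 2 = P^2" using rr_sq by (simp add: power2_eq_square algebra_simps rr_rr)
  ultimately have e: "integral\<^sup>L lborel (\<lambda>x. std_normal_density x *\<^sub>R iexp (?t * x)) = complex_of_real (exp (- (P^2)))"
    by simp
  have "J 0 0 X P = integral\<^sup>L lborel (\<lambda>x. complex_of_real (sqrt (2 * pi)) * (std_normal_density x *\<^sub>R iexp (?t * x)))"
    unfolding J_def Jg_def AA_def
    by (intro Bochner_Integration.integral_cong refl)
       (simp add: phi_def std_normal_density_def cis_conv_exp scaleR_conv_of_real mult.assoc)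
  also have "\<dots> = complex_of_real (sqrt (2 * pi)) * integral\<^sup>L lborel (\<lambda>x. std_normal_density x *\<^sub>R iexp (?t * x))"
    by (rule Bochner_Integration.integral_mult_right_zero)
  also have "\<dots> = complex_of_real (sqrt (2 * pi)) * complex_of_real (exp (- (P^2)))"
    by (simp only: e)
  finally show ?thesis by simp
qed


definition aa :: "nat \<Rightarrow> nat \<Rightarrow> complex \<Rightarrow> complex \<Rightarrow> complex" where
  "aa n m u v = (\<Sum>c\<le>n. of_nat (n choose c) * of_nat (m choose c) * fact c * (-2)^c * (2 * u)^(m-c) * (2 * v)^(n-c))"

lemma aa_00: "aa 0 0 u v = 1" by (simp add: aa_def)

lemma aa_0Suc: "aa 0 (Suc m) u v = 2 * u * aa 0 m u v" by (simp add: aa_def)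

lemma aa_Suc: "aa (Suc n) m u v = 2 * v * aa n m u v - 2 * of_nat m * aa n (m - 1) u v"
proof -
  define rest where "rest c = of_nat (m choose c) * fact c * (-2)^c * (2 * u)^(m-c) * (2 * v)^(Suc n - c)" for c
  define f where "f c = of_nat (Suc n choose c) * rest c" for c
  define g where "g c = of_nat (n choose c) * rest c" for c
  have "aa (Suc n) m u v = (\<Sum>c\<le>Suc n. f c)"
    unfolding aa_def f_def rest_def by (simp add: mult.assoc)
  also have "\<dots> = f 0 + (\<Sum>d\<le>n. f (Suc d))" by (rule sum.atMost_Suc_shift)
  also have "\<dots> = f 0 + (\<Sum>d\<le>n. g (Suc d)) + (\<Sum>d\<le>n. of_nat (n choose d) * rest (Suc d))"
    unfolding f_def g_def by (simp add: sum.distrib algebra_simps)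
  also have "f 0 + (\<Sum>d\<le>n. g (Suc d)) = (\<Sum>c\<le>Suc n. g c)"
    by (subst sum.atMost_Suc_shift) (simp add: f_def g_def)
  also have "(\<Sum>c\<le>Suc n. g c) = 2 * v * aa n m u v"
  proof -
    have "(\<Sum>c\<le>Suc n. g c) = (\<Sum>c\<le>n. g c)" by (simp add: g_def)
    also have "\<dots> = (\<Sum>c\<le>n. 2 * v * (of_nat (n choose c) * of_nat (m choose c) * fact c * (-2)^c * (2 * u)^(m-c) * (2 * v)^(n-c)))"
    proof (rule sum.cong[OF refl])
      fix c assume "c \<in> {..n}"
      then have "Suc n - c = Suc (n - c)" by (simp add: Suc_diff_le)
      then show "g c = 2 * v * (of_nat (n choose c) * of_nat (m choose c) * fact c * (-2)^c * (2 * u)^(m-c) * (2 * v)^(n-c))"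
        by (simp add: g_def rest_def algebra_simps)
    qed
    also have "\<dots> = 2 * v * aa n m u v" by (simp add: aa_def sum_distrib_left)
    finally show ?thesis .
  qed
  also have "(\<Sum>d\<le>n. of_nat (n choose d) * rest (Suc d)) = - 2 * of_nat m * aa n (m - 1) u v"
  proof (cases m)
    case 0 then show ?thesis by (simp add: rest_def)
  next
    case (Suc m')
    have "(\<Sum>d\<le>n. of_nat (n choose d) * rest (Suc d)) =
      (\<Sum>d\<le>n. - 2 * of_nat m * (of_nat (n choose d) * of_nat (m' choose d) * fact d * (-2)^d * (2 * u)^(m'-d) * (2 * v)^(n-d)))"
    proof (rule sum.cong[OF refl])
      fix d
      have b: "of_nat (Suc m' choose Suc d) * (fact (Suc d) :: complex) = of_nat (Suc m') * of_nat (m' choose d) * fact d"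
      proof -
        have "(Suc m' choose Suc d) * fact (Suc d) = Suc d * (Suc m' choose Suc d) * fact d"
          by (simp only: fact_Suc of_nat_id mult_ac)
        also have "\<dots> = Suc m' * (m' choose d) * fact d" by (simp only: Suc_times_binomial)
        finally have "(Suc m' choose Suc d) * fact (Suc d) = Suc m' * (m' choose d) * (fact d :: nat)" .
        from arg_cong[of _ _ "of_nat :: nat \<Rightarrow> complex", OF this]
        show ?thesis by (simp only: of_nat_mult of_nat_fact)
      qed
      show "of_nat (n choose d) * rest (Suc d) =
        - 2 * of_nat m * (of_nat (n choose d) * of_nat (m' choose d) * fact d * (-2)^d * (2 * u)^(m'-d) * (2 * v)^(n-d))"
        unfolding rest_def Suc using b
        by (simp add: algebra_simps)
    qed
    also have "\<dots> = - 2 * of_nat m * aa n (m - 1) u v"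
      by (simp add: aa_def sum_distrib_left Suc)
    finally show ?thesis .
  qed
  finally show ?thesis by simp
qed

lemma J_closed: "J n m X P = complex_of_real (sqrt (2 * pi) * exp (- (P^2))) * aa n m (Complex X P) (Complex X (- P))"
proof (induction n arbitrary: m)
  case 0
  show ?case
  proof (induction m)
    case 0 then show ?case by (simp add: J_00 aa_00)
  next
    case (Suc m) then show ?case by (simp add: J_R2 aa_0Suc)
  qed
next
  case (Suc n)
  show ?case by (simp add: J_R1 aa_Suc Suc algebra_simps)
qed


definition kap :: "real \<Rightarrow> nat \<Rightarrow> real" where
  "kap hb n = 1 / (root 4 (pi * hb) * sqrt (2^n * fact n))"

lemma kap_pos: "hb > 0 \<Longrightarrow> kap hb n > 0"
  unfolding kap_def by (auto intro!: divide_pos_pos mult_pos_pos)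

lemma hermite_fun_eq: "hermite_fun hb n y = complex_of_real (kap hb n * exp (- (y^2) / (2 * hb)) * Hp n (y / sqrt hb))"
  unfolding hermite_fun_def kap_def hermite_poly_Hp by simp

definition CC :: "real \<Rightarrow> nat \<Rightarrow> nat \<Rightarrow> real" where
  "CC hb n m = 1 / (2 * pi * hb) * sqrt (2 * hb) * kap hb n * kap hb m * sqrt (2 * pi)"

lemma CC_pos: "hb > 0 \<Longrightarrow> CC hb n m > 0"
  unfolding CC_def using kap_pos[of hb n] kap_pos[of hb m] by (auto intro!: mult_pos_pos)

lemma cw_a1: assumes s: "s > 0" and cc: "cc = sqrt 2 * s"
  shows "(x + cc * u / 2) / s = x / s + rr * u"
  using s unfolding cc rr_def by (simp add: field_simps)
lemma cw_a2: assumes s: "s > 0" and cc: "cc = sqrt 2 * s"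
  shows "(x - cc * u / 2) / s = x / s + (- rr) * u"
  using s unfolding cc rr_def by (simp add: field_simps)
lemma cw_e: assumes s: "s > 0" "s * s = hb" and cc: "cc = sqrt 2 * s"
  shows "- ((x + cc * u / 2)^2) / (2 * hb) + - ((x - cc * u / 2)^2) / (2 * hb) = - ((x / s)^2) + - (u^2) / 2"
proof -
  have hb: "hb > 0" using s by (metis mult_pos_pos)
  have c2: "cc * cc = 2 * hb" using s unfolding cc by (simp add: algebra_simps)
  have "(x + cc * u / 2)^2 + (x - cc * u / 2)^2 = 2 * x^2 + (cc * cc) * u^2 / 2"
    by (simp add: power2_eq_square algebra_simps)
  also have "\<dots> = 2 * x^2 + hb * u^2" unfolding c2 by simp
  finally have 1: "(x + cc * u / 2)^2 + (x - cc * u / 2)^2 = 2 * x^2 + hb * u^2" .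
  have "- ((x + cc * u / 2)^2) / (2 * hb) + - ((x - cc * u / 2)^2) / (2 * hb) = - (((x + cc * u / 2)^2 + (x - cc * u / 2)^2) / (2 * hb))"
    by (simp add: add_divide_distrib)
  also have "\<dots> = - (x^2 / hb) - u^2 / 2" unfolding 1 using hb by (simp add: field_simps)
  also have "x^2 / hb = (x / s)^2" using s by (simp add: power_divide power2_eq_square)
  finally show ?thesis by simp
qed
lemma cw_c: assumes s: "s > 0" "s * s = hb" and cc: "cc = sqrt 2 * s"
  shows "- (p * (cc * u)) / hb = (- 2 * rr * (p / s)) * u"
proof -
  have "- (p * (cc * u)) / hb = - (p * sqrt 2 * u * s) / (s * s)" unfolding cc s(2)[symmetric] by (simp add: algebra_simps)
  also have "\<dots> = - (p * sqrt 2 * u) / s" using s(1) by (simp add: field_simps)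
  also have "\<dots> = (- 2 * rr * (p / s)) * u" unfolding rr_def using s by (simp add: field_simps)
  finally show ?thesis .
qed

lemma cross_wigner_hermite:
  assumes hb: "hb > 0"
  shows "cross_wigner hb (hermite_fun hb n) (hermite_fun hb m) w =
    complex_of_real (CC hb n m * exp (- ((w$1 / sqrt hb)^2 + (w$2 / sqrt hb)^2))) *
    aa n m (Complex (w$1 / sqrt hb) (w$2 / sqrt hb)) (Complex (w$1 / sqrt hb) (- (w$2 / sqrt hb)))"
proof -
  define x where "x = w$1"
  define p where "p = w$2"
  define s where "s = sqrt hb"
  define X where "X = x / s"
  define P where "P = p / s"
  define cc where "cc = sqrt (2 * hb)"
  have s: "s > 0" "s * s = hb" using hb by (auto simp: s_def)
  have cc: "cc = sqrt 2 * s" "cc > 0" using hb by (auto simp: cc_def s_def real_sqrt_mult)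
  have s2: "sqrt 2 * sqrt 2 = (2::real)" by simp
  have rr: "rr * sqrt 2 = 1" unfolding rr_def by simp
  let ?F = "\<lambda>\<tau>. hermite_fun hb n (x + \<tau> / 2) * cnj (hermite_fun hb m (x - \<tau> / 2)) * cis (- (p * \<tau>) / hb)"
  have int1: "integral\<^sup>L lborel ?F = \<bar>cc\<bar> *\<^sub>R integral\<^sup>L lborel (\<lambda>u. ?F (0 + cc * u))"
    by (rule lborel_integral_real_affine) (use cc in auto)
  have pt: "?F (0 + cc * u) = complex_of_real (kap hb n * kap hb m * exp (- (X^2))) *
      (complex_of_real (phi u) * (complex_of_real (AA n m X u) * cis ((- 2 * rr * P) * u)))" for u
  proof -
    have a1: "(x + cc * u / 2) / s = X + rr * u" unfolding X_def by (rule cw_a1[OF s(1) cc(1)])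
    have a2: "(x - cc * u / 2) / s = X + (- rr) * u" unfolding X_def by (rule cw_a2[OF s(1) cc(1)])
    have e: "exp (- ((x + cc * u / 2)^2) / (2 * hb)) * exp (- ((x - cc * u / 2)^2) / (2 * hb)) = exp (- (X^2)) * phi u"
      unfolding X_def phi_def exp_add[symmetric] cw_e[OF s cc(1)] ..
    have c: "- (p * (cc * u)) / hb = (- 2 * rr * P) * u" unfolding P_def by (rule cw_c[OF s cc(1)])
    have "?F (0 + cc * u) = complex_of_real (kap hb n * kap hb m * (exp (- ((x + cc * u / 2)^2) / (2 * hb)) * exp (- ((x - cc * u / 2)^2) / (2 * hb)))
       * (Hp n ((x + cc * u / 2) / s) * Hp m ((x - cc * u / 2) / s))) * cis (- (p * (cc * u)) / hb)"
      unfolding hermite_fun_eq s_def by (simp add: algebra_simps)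
    also have "\<dots> = complex_of_real (kap hb n * kap hb m * exp (- (X^2)) * phi u * AA n m X u) * cis ((- 2 * rr * P) * u)"
      unfolding a1 a2 c e AA_def by (simp add: algebra_simps)
    finally show ?thesis by (simp add: algebra_simps)
  qed
  have "integral\<^sup>L lborel ?F = complex_of_real cc * (complex_of_real (kap hb n * kap hb m * exp (- (X^2))) * J n m X P)"
    unfolding int1 pt J_def Jg_def using cc
    by (simp add: scaleR_conv_of_real)
  also have "\<dots> = complex_of_real (cc * kap hb n * kap hb m * sqrt (2 * pi) * exp (- (X^2 + P^2))) * aa n m (Complex X P) (Complex X (- P))"
  proof -
    have ee: "exp (- (X^2 + P^2)) = exp (- (X^2)) * exp (- (P^2))" by (simp add: exp_add[symmetric])
    show ?thesis unfolding J_closed ee of_real_mult by (simp add: algebra_simps)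
  qed
  finally show ?thesis
    unfolding cross_wigner_def CC_def x_def[symmetric] p_def[symmetric] s_def[symmetric] X_def[symmetric] P_def[symmetric] cc_def[symmetric]
    by (simp add: algebra_simps)
qed


lemma infinite_unit_circle: "infinite {w::complex. cmod w = 1}"
proof
  assume fin: "finite {w::complex. cmod w = 1}"
  let ?g = "\<lambda>a::real. Complex a (sqrt (1 - a^2))"
  have "?g ` {0..1} \<subseteq> {w::complex. cmod w = 1}"
  proof
    fix w assume "w \<in> ?g ` {0..1}"
    then obtain a where a: "a \<in> {0..1}" "w = ?g a" by blast
    have "a^2 \<le> 1" using a(1) by (simp add: power_le_one)
    then show "w \<in> {w::complex. cmod w = 1}" using a by (simp add: cmod_def)
  qed
  then have "finite (?g ` {0..1})" using fin finite_subset by blast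
  moreover have "inj_on ?g {0..1}" by (auto simp: inj_on_def)
  ultimately have "finite {0..1::real}" using finite_imageD by blast
  then show False using infinite_Icc[of "0::real" 1] by simp
qed

lemma poly_circle_zero:
  fixes Q :: "complex poly"
  assumes "\<And>w. cmod w = 1 \<Longrightarrow> poly Q w = 0"
  shows "Q = 0"
proof (rule ccontr)
  assume "Q \<noteq> 0"
  then have "finite {x. poly Q x = 0}" by (rule poly_roots_finite)
  moreover have "{w::complex. cmod w = 1} \<subseteq> {x. poly Q x = 0}" using assms by auto
  ultimately show False using infinite_unit_circle finite_subset by blast
qed

definition KK :: "nat \<Rightarrow> nat \<Rightarrow> nat \<Rightarrow> complex" where
  "KK n m c = of_nat (n choose c) * of_nat (m choose c) * fact c * (-2)^c"

lemma aa_KK: "aa n m u v = (\<Sum>c\<le>n. KK n m c * (2 * u)^(m-c) * (2 * v)^(n-c))"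
  unfolding aa_def KK_def by simp

definition Psi :: "(nat \<Rightarrow> nat \<Rightarrow> complex) \<Rightarrow> complex \<Rightarrow> complex \<Rightarrow> nat \<Rightarrow> complex \<Rightarrow> complex" where
  "Psi B al be N w = (\<Sum>n\<le>N. \<Sum>m\<le>N. B n m * aa n m (al * w + be / w) (cnj al / w + cnj be * w))"

definition Qp :: "(nat \<Rightarrow> nat \<Rightarrow> complex) \<Rightarrow> complex \<Rightarrow> complex \<Rightarrow> nat \<Rightarrow> complex poly" where
  "Qp B al be N = (\<Sum>n\<le>N. \<Sum>m\<le>N. \<Sum>c\<le>n. smult (B n m * KK n m c * 2^(m-c) * 2^(n-c))
      ([:be, 0, al:]^(m-c) * [:cnj al, 0, cnj be:]^(n-c) * monom 1 (2*N - (m-c) - (n-c))))"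

lemma laurent_pow:
  fixes w :: complex assumes "w \<noteq> 0"
  shows "(a * w + b / w)^i * w^i = poly ([:b, 0, a:]^i) w"
proof -
  have "(a * w + b / w) * w = poly [:b, 0, a:] w" using assms by (simp add: field_simps power2_eq_square)
  then show ?thesis by (simp add: poly_power power_mult_distrib[symmetric])
qed

lemma Psi_poly:
  fixes w :: complex assumes w: "w \<noteq> 0"
  shows "w^(2*N) * Psi B al be N w = poly (Qp B al be N) w"
proof -
  have tm: "w^(2*N) * ((2 * (al * w + be / w))^i * (2 * (cnj al / w + cnj be * w))^j)
     = 2^i * 2^j * (poly ([:be, 0, al:]^i) w * poly ([:cnj al, 0, cnj be:]^j) w * w^(2*N - i - j))"
    if "i \<le> N" "j \<le> N" for i j
  proof -
    have pw: "w^(2*N) = w^i * w^j * w^(2*N - i - j)"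
      using that by (simp flip: power_add)
    have "w^(2*N) * ((2 * (al * w + be / w))^i * (2 * (cnj al / w + cnj be * w))^j)
      = 2^i * 2^j * (((al * w + be / w)^i * w^i) * ((cnj be * w + cnj al / w)^j * w^j) * w^(2*N - i - j))"
      unfolding pw power_mult_distrib add.commute[of "cnj al / w"] by (simp only: mult_ac)
    then show ?thesis
      unfolding laurent_pow[OF w, of al be i] laurent_pow[OF w, of "cnj be" "cnj al" j] .
  qed
  have "w^(2*N) * Psi B al be N w =
    (\<Sum>n\<le>N. \<Sum>m\<le>N. \<Sum>c\<le>n. B n m * KK n m c * (w^(2*N) * ((2 * (al * w + be / w))^(m-c) * (2 * (cnj al / w + cnj be * w))^(n-c))))"
    unfolding Psi_def aa_KK by (simp add: sum_distrib_left algebra_simps)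
  also have "\<dots> = poly (Qp B al be N) w"
    unfolding Qp_def poly_sum
  proof (intro sum.cong refl)
    fix n m c assume n: "n \<in> {..N}" and m: "m \<in> {..N}" and c: "c \<in> {..n}"
    have "m - c \<le> N" "n - c \<le> N" using n m by auto
    from tm[OF this]
    show "B n m * KK n m c * (w^(2*N) * ((2 * (al * w + be / w))^(m-c) * (2 * (cnj al / w + cnj be * w))^(n-c))) =
      poly (smult (B n m * KK n m c * 2^(m-c) * 2^(n-c))
      ([:be, 0, al:]^(m-c) * [:cnj al, 0, cnj be:]^(n-c) * monom 1 (2*N - (m-c) - (n-c)))) w"
      by (simp add: poly_monom algebra_simps)
  qed
  finally show ?thesis .
qed

lemma Psi_zero:
  assumes "\<And>w. cmod w = 1 \<Longrightarrow> Psi B al be N w = 0" and "w \<noteq> 0"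
  shows "Psi B al be N w = 0"
proof -
  have "Qp B al be N = 0"
  proof (rule poly_circle_zero)
    fix w :: complex assume "cmod w = 1"
    then have "w \<noteq> 0" by auto
    then show "poly (Qp B al be N) w = 0"
      using Psi_poly[of w N B al be] assms(1)[OF \<open>cmod w = 1\<close>] by simp
  qed
  then show ?thesis using Psi_poly[OF assms(2), of N B al be] assms(2) by simp
qed


lemma KK_nz: "KK n m c \<noteq> 0 \<Longrightarrow> c \<le> n \<and> c \<le> m"
  unfolding KK_def by (auto simp: binomial_eq_0_iff)

lemma KK_00: "KK n m 0 = 1" unfolding KK_def by simp

lemma sum_single:
  assumes "finite A" "a \<in> A" "\<And>x. x \<in> A \<Longrightarrow> x \<noteq> a \<Longrightarrow> f x = 0"
  shows "sum f A = f a"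
proof -
  have "sum f A = f a + sum f (A - {a})" using assms(1,2) by (rule sum.remove)
  also have "sum f (A - {a}) = 0" using assms(3) by (intro sum.neutral) auto
  finally show ?thesis by simp
qed

lemma inv_t_lim: "((\<lambda>t::real. complex_of_real (1 / t)) \<longlongrightarrow> 0) at_top"
proof -
  have "((\<lambda>t::real. 1 / t) \<longlongrightarrow> 0) at_top" by real_asymp
  from tendsto_of_real[OF this, where 'a=complex] show ?thesis by simp
qed

lemma cancel_aux:
  fixes T :: complex assumes "T \<noteq> 0"
  shows "K * 2^i * 2^j * A^i * B^j * (1/T)^e = K * (2 * (T * A))^i * (2 * (T * B))^j / (T^i * T^j * T^e)"
  using assms by (simp add: power_mult_distrib power_one_over field_simps)

lemma aa_asym:
  assumes "n \<le> M" "m \<le> M"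
  shows "((\<lambda>t. aa n m (al * of_real t + be / of_real t) (cnj al / of_real t + cnj be * of_real t) / of_real t ^ (2*M))
     \<longlongrightarrow> (if n = M \<and> m = M then 4^M * (al * cnj be)^M else 0)) at_top"
proof -
  define L where "L c = KK n m c * 2^(m-c) * 2^(n-c) * al^(m-c) * cnj be^(n-c) * 0^(2*M - (m-c) - (n-c))" for c
  have lim: "((\<lambda>t. KK n m c * (2 * (al * of_real t + be / of_real t))^(m-c) * (2 * (cnj al / of_real t + cnj be * of_real t))^(n-c)
       / of_real t ^ (2*M)) \<longlongrightarrow> L c) at_top" if c: "c \<in> {..n}" for c
  proof -
    let ?i = "m - c" and ?j = "n - c"
    have ij: "?i + ?j \<le> 2 * M" using assms by auto
    let ?g = "\<lambda>t::real. KK n m c * 2^(m-c) * 2^(n-c) * (al + be * of_real (1/t) * of_real (1/t))^(m-c)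
         * (cnj al * of_real (1/t) * of_real (1/t) + cnj be)^(n-c) * of_real (1/t) ^ (2*M - (m-c) - (n-c))"
    have ev: "eventually (\<lambda>t. ?g t = KK n m c * (2 * (al * of_real t + be / of_real t))^(m-c) * (2 * (cnj al / of_real t + cnj be * of_real t))^(n-c)
       / of_real t ^ (2*M)) at_top"
      using eventually_gt_at_top[of "0::real"]
    proof eventually_elim
      case (elim t)
      then have t: "complex_of_real t \<noteq> 0" by simp
      have e1: "al * of_real t + be / of_real t = of_real t * (al + be * of_real (1/t) * of_real (1/t))"
        using t by (simp add: field_simps)
      have e2: "cnj al / of_real t + cnj be * of_real t = of_real t * (cnj al * of_real (1/t) * of_real (1/t) + cnj be)"
        using t by (simp add: field_simps)
      have e3: "(of_real t :: complex) ^ (2*M) = of_real t ^ (m-c) * of_real t ^ (n-c) * of_real t ^ (2*M - (m-c) - (n-c))"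
        using ij by (simp flip: power_add)
      show ?case unfolding e1 e2 e3 using cancel_aux[OF t] by simp
    qed
    have "(?g \<longlongrightarrow> KK n m c * 2^(m-c) * 2^(n-c) * (al + be * 0 * 0)^(m-c) * (cnj al * 0 * 0 + cnj be)^(n-c) * 0 ^ (2*M - (m-c) - (n-c))) at_top"
      by (intro tendsto_intros inv_t_lim)
    then have "(?g \<longlongrightarrow> L c) at_top" by (simp add: L_def)
    then show ?thesis using ev by (rule Lim_transform_eventually)
  qed
  have "((\<lambda>t. aa n m (al * of_real t + be / of_real t) (cnj al / of_real t + cnj be * of_real t) / of_real t ^ (2*M))
     \<longlongrightarrow> (\<Sum>c\<le>n. L c)) at_top"
    unfolding aa_KK sum_divide_distrib by (intro tendsto_sum lim)
  moreover have "(\<Sum>c\<le>n. L c) = (if n = M \<and> m = M then 4^M * (al * cnj be)^M else 0)"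
  proof -
    have z: "L c = 0" if "c \<in> {..n}" "\<not> (n = M \<and> m = M \<and> c = 0)" for c
    proof (cases "KK n m c = 0")
      case False
      then have "c \<le> n" "c \<le> m" using KK_nz by auto
      then have "2*M - (m-c) - (n-c) \<noteq> 0" using that(2) assms by auto
      then show ?thesis by (simp add: L_def)
    qed (simp add: L_def)
    show ?thesis
    proof (cases "n = M \<and> m = M")
      case True
      then have "(\<Sum>c\<le>n. L c) = L 0" by (intro sum_single) (use z in auto)
      also have "L 0 = 4^M * (al * cnj be)^M"
      proof -
        have "(2::complex)^M * 2^M = 4^M" by (simp flip: power_mult_distrib)
        then show ?thesis using True by (simp add: L_def KK_00 power_mult_distrib)
      qed
      finally show ?thesis using True by simp
    next
      case False
      have "(\<Sum>c\<le>n. L c) = 0" by (intro sum.neutral ballI z) (use False in auto)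
      then show ?thesis using False by (subst if_not_P) auto
    qed
  qed
  ultimately show ?thesis by simp
qed

lemma aa_homog:
  fixes lam :: complex assumes "lam \<noteq> 0"
  shows "aa n m (lam * u) (v / lam) * lam^n = lam^m * aa n m u v"
  unfolding aa_KK sum_distrib_right sum_distrib_left
proof (rule sum.cong[OF refl])
  fix c assume "c \<in> {..n}"
  show "KK n m c * (2 * (lam * u))^(m-c) * (2 * (v / lam))^(n-c) * lam^n = lam^m * (KK n m c * (2 * u)^(m-c) * (2 * v)^(n-c))"
  proof (cases "KK n m c = 0")
    case False
    then have c: "c \<le> n" "c \<le> m" using KK_nz by auto
    have "lam^n = lam^(n-c) * lam^c" "lam^m = lam^(m-c) * lam^c" using c by (simp_all flip: power_add)
    then show ?thesis using assms by (simp add: power_mult_distrib power_divide field_simps)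
  qed simp
qed


lemma lag_term:
  fixes rho :: real assumes j: "j \<le> n"
  shows "real (n choose (n-j)) * real ((n+k) choose (n-j)) * fact (n-j) * (-2)^(n-j) * 2^(k+j) * 2^j * rho^j
       = (-2)^n * 2^k * fact n * ((-1)^j * real ((n+k) choose (n-j)) * (2 * rho)^j / fact j)"
proof -
  have "fact (n-j) * fact j * (n choose (n-j)) = (fact n :: nat)"
    using binomial_fact_lemma[of "n-j" n] j by simp
  then have "real (fact (n-j) * fact j * (n choose (n-j))) = real (fact n)" by simp
  then have "fact (n-j) * fact j * real (n choose (n-j)) = fact n" by (simp only: of_nat_mult of_nat_fact)
  then have f: "fact (n-j) * real (n choose (n-j)) = fact n / fact j"
    by (simp add: field_simps)
  have p: "(-2::real)^n = (-2)^(n-j) * (-1)^j * 2^j"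
  proof -
    have "(-1::real)^j * 2^j = (-2)^j" by (simp flip: power_mult_distrib)
    then show ?thesis using j by (simp add: mult.assoc flip: power_add)
  qed
  show ?thesis
    unfolding p using f by (simp add: power_mult_distrib power_add field_simps)
qed

lemma aa_laguerre:
  "aa n (n+k) al (cnj al) = al^k * complex_of_real ((-2)^n * 2^k * fact n * gen_laguerre n k (2 * (cmod al)^2))"
proof -
  let ?rho = "(cmod al)^2"
  have "aa n (n+k) al (cnj al) = (\<Sum>c=0..n. KK n (n+k) c * (2 * al)^(n+k-c) * (2 * cnj al)^(n-c))"
    unfolding aa_KK atMost_atLeast0 ..
  also have "\<dots> = (\<Sum>j=0..n. KK n (n+k) (n-j) * (2 * al)^(n+k-(n-j)) * (2 * cnj al)^(n-(n-j)))"
    by (subst sum.atLeastAtMost_rev) simp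
  also have "\<dots> = (\<Sum>j=0..n. al^k * complex_of_real ((-2)^n * 2^k * fact n * ((-1)^j * real ((n+k) choose (n-j)) * (2 * ?rho)^j / fact j)))"
  proof (rule sum.cong[OF refl])
    fix j assume "j \<in> {0..n}"
    then have j: "j \<le> n" by simp
    have e1: "n+k-(n-j) = k + j" "n-(n-j) = j" using j by auto
    have "(2 * al)^(k+j) * (2 * cnj al)^j = al^k * 2^(k+j) * 2^j * (al * cnj al)^j"
      by (simp add: power_mult_distrib power_add)
    also have "al * cnj al = complex_of_real ?rho" by (metis complex_norm_square)
    finally have e2: "(2 * al)^(k+j) * (2 * cnj al)^j = al^k * complex_of_real (2^(k+j) * 2^j * ?rho^j)"
      by simp
    have "KK n (n+k) (n-j) * (2 * al)^(n+k-(n-j)) * (2 * cnj al)^(n-(n-j))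
       = al^k * complex_of_real (real (n choose (n-j)) * real ((n+k) choose (n-j)) * fact (n-j) * (-2)^(n-j) * 2^(k+j) * 2^j * ?rho^j)"
      unfolding e1 mult.assoc[of _ "(2 * al)^(k+j)"] e2 KK_def by (simp add: algebra_simps)
    then show "KK n (n+k) (n-j) * (2 * al)^(n+k-(n-j)) * (2 * cnj al)^(n-(n-j)) =
       al^k * complex_of_real ((-2)^n * 2^k * fact n * ((-1)^j * real ((n+k) choose (n-j)) * (2 * ?rho)^j / fact j))"
      unfolding lag_term[OF j] .
  qed
  also have "\<dots> = al^k * complex_of_real ((-2)^n * 2^k * fact n * gen_laguerre n k (2 * ?rho))"
    unfolding gen_laguerre_def atMost_atLeast0
    by (simp only: sum_distrib_left of_real_sum)
  finally show ?thesis .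
qed

lemma gen_laguerre_0: "gen_laguerre 0 k x = 1"
  unfolding gen_laguerre_def by simp

lemma gen_laguerre_roots_finite: "finite {p. gen_laguerre n k p = 0}"
proof -
  define Q where "Q = (\<Sum>j\<le>n. smult ((-1)^j * real ((n + k) choose (n - j)) / fact j) ([:0, 1:]^j))"
  have pq: "poly Q x = gen_laguerre n k x" for x
    unfolding Q_def gen_laguerre_def poly_sum by (simp add: poly_power)
  have "poly Q 0 = real ((n + k) choose n)"
    unfolding pq gen_laguerre_def by (subst sum_single[where a=0]) auto
  then have "Q \<noteq> 0" by auto
  then have "finite {p. poly Q p = 0}" by (rule poly_roots_finite)
  then show ?thesis unfolding pq .
qed


lemma sum_single2:
  fixes N a b :: nat
  assumes "a \<le> N" "b \<le> N" "\<And>n m. n \<le> N \<Longrightarrow> m \<le> N \<Longrightarrow> (n, m) \<noteq> (a, b) \<Longrightarrow> f n m = 0"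
  shows "(\<Sum>n\<le>N. \<Sum>m\<le>N. f n m) = (f a b :: complex)"
proof -
  have "(\<Sum>n\<le>N. \<Sum>m\<le>N. f n m) = (\<Sum>m\<le>N. f a m)"
  proof (rule sum_single)
    show "finite {..N}" by simp
    show "a \<in> {..N}" using assms by simp
    fix x assume "x \<in> {..N}" "x \<noteq> a"
    then show "(\<Sum>m\<le>N. f x m) = 0" by (intro sum.neutral) (use assms in auto)
  qed
  also have "\<dots> = f a b"
    by (rule sum_single) (use assms in auto)
  finally show ?thesis .
qed

lemma cancel_aux2:
  fixes T :: complex
  assumes "T \<noteq> 0" "Xv = T^m * A / T^n" "T^n * T^d = T^m * T^e"
  shows "Xv / T^d = A * (1/T)^e"
proof -
  have "Xv / T^d = T^m * A / (T^n * T^d)" using assms(2) by simp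
  also have "\<dots> = T^m * A / (T^m * T^e)" using assms(3) by simp
  also have "\<dots> = A / T^e" using assms(1) by simp
  finally show ?thesis by (simp add: power_one_over)
qed

lemma lim_Psi5:
  assumes hB: "\<And>n m. B n m \<noteq> 0 \<Longrightarrow> n \<le> M \<and> m \<le> M" and MN: "M \<le> N"
  shows "((\<lambda>t. Psi B al be N (of_real t) / of_real t ^ (2*M)) \<longlongrightarrow> B M M * (4^M * (al * cnj be)^M)) at_top"
proof -
  let ?L = "\<lambda>n m. B n m * (if n = M \<and> m = M then 4^M * (al * cnj be)^M else 0)"
  have lim: "((\<lambda>t. B n m * aa n m (al * of_real t + be / of_real t) (cnj al / of_real t + cnj be * of_real t) / of_real t ^ (2*M))
     \<longlongrightarrow> ?L n m) at_top" for n m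
  proof (cases "B n m = 0")
    case False
    then have "n \<le> M" "m \<le> M" using hB by auto
    from tendsto_mult_left[OF aa_asym[OF this, of al be], of "B n m"]
    show ?thesis by (simp add: mult.assoc)
  qed simp
  have "((\<lambda>t. Psi B al be N (of_real t) / of_real t ^ (2*M)) \<longlongrightarrow> (\<Sum>n\<le>N. \<Sum>m\<le>N. ?L n m)) at_top"
    unfolding Psi_def sum_divide_distrib by (intro tendsto_sum lim)
  also have "(\<Sum>n\<le>N. \<Sum>m\<le>N. ?L n m) = ?L M M"
    by (rule sum_single2) (use MN in auto)
  finally show ?thesis by simp
qed

lemma lim_Psi6:
  assumes hB: "\<And>n m. B n m \<noteq> 0 \<Longrightarrow> n0 \<le> n \<and> m \<le> M" and MN: "M \<le> N" "n0 \<le> N" "n0 \<le> M"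
  shows "((\<lambda>t. Psi B al 0 N (of_real t) / of_real t ^ (M - n0)) \<longlongrightarrow> B n0 M * aa n0 M al (cnj al)) at_top"
proof -
  let ?L = "\<lambda>n m. B n m * aa n m al (cnj al) * 0^((n - n0) + (M - m))"
  have lim: "((\<lambda>t. B n m * aa n m (al * of_real t + 0 / of_real t) (cnj al / of_real t + cnj 0 * of_real t) / of_real t ^ (M - n0))
     \<longlongrightarrow> ?L n m) at_top" for n m
  proof (cases "B n m = 0")
    case False
    then have nm: "n0 \<le> n" "m \<le> M" using hB by auto
    have ev: "eventually (\<lambda>t. B n m * aa n m al (cnj al) * complex_of_real (1/t) ^ ((n - n0) + (M - m)) =
        B n m * aa n m (al * of_real t + 0 / of_real t) (cnj al / of_real t + cnj 0 * of_real t) / of_real t ^ (M - n0)) at_top"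
      using eventually_gt_at_top[of "0::real"]
    proof eventually_elim
      case (elim t)
      then have t: "complex_of_real t \<noteq> 0" by simp
      have h: "aa n m (of_real t * al) (cnj al / of_real t) * of_real t ^ n = of_real t ^ m * aa n m al (cnj al)"
        by (rule aa_homog[OF t])
      have pw: "(of_real t :: complex) ^ n * of_real t ^ (M - n0) = of_real t ^ m * of_real t ^ ((n - n0) + (M - m))"
      proof -
        have "m + ((n - n0) + (M - m)) = n + (M - n0)" using nm MN(3) by simp
        then show ?thesis by (simp only: power_add[symmetric])
      qed
      have "aa n m (al * of_real t + 0 / of_real t) (cnj al / of_real t + cnj 0 * of_real t) / of_real t ^ (M - n0)
          = aa n m al (cnj al) * complex_of_real (1/t) ^ ((n - n0) + (M - m))"
      proof -
        have "aa n m (al * of_real t + 0 / of_real t) (cnj al / of_real t + cnj 0 * of_real t) = aa n m (of_real t * al) (cnj al / of_real t)"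
          by (simp add: mult.commute)
        moreover have "aa n m (of_real t * al) (cnj al / of_real t) = of_real t ^ m * aa n m al (cnj al) / of_real t ^ n"
          using h t by (simp add: field_simps)
        ultimately show ?thesis using cancel_aux2[OF t _ pw] by simp
      qed
      then show ?case by (simp only: times_divide_eq_right[symmetric] mult.assoc)
    qed
    have "((\<lambda>t. B n m * aa n m al (cnj al) * complex_of_real (1/t) ^ ((n - n0) + (M - m))) \<longlongrightarrow> ?L n m) at_top"
      by (intro tendsto_intros inv_t_lim)
    then show ?thesis using ev by (rule Lim_transform_eventually)
  qed simp
  have "((\<lambda>t. Psi B al 0 N (of_real t) / of_real t ^ (M - n0)) \<longlongrightarrow> (\<Sum>n\<le>N. \<Sum>m\<le>N. ?L n m)) at_top"
    unfolding Psi_def sum_divide_distrib by (intro tendsto_sum lim)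
  also have "(\<Sum>n\<le>N. \<Sum>m\<le>N. ?L n m) = ?L n0 M"
  proof (rule sum_single2)
    fix n m assume "(n, m) \<noteq> (n0, M)"
    show "?L n m = 0"
    proof (cases "B n m = 0")
      case False
      then have "n0 \<le> n" "m \<le> M" using hB by auto
      then have "(n - n0) + (M - m) \<noteq> 0" using \<open>(n, m) \<noteq> (n0, M)\<close> by auto
      then have "(0::complex)^((n - n0) + (M - m)) = 0" by (simp add: power_0_left)
      then show ?thesis by (simp only: mult_zero_right)
    qed simp
  qed (use MN in auto)
  finally show ?thesis by simp
qed


lemma norm_vec2: "norm (vector [a, b] :: real^2) = sqrt (a^2 + b^2)"
  by (simp add: norm_vec_def L2_set_def sum_2)

lemma mv2: "((S :: real^2^2) *v z) $ 1 = S$1$1 * z$1 + S$1$2 * z$2"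
           "((S :: real^2^2) *v z) $ 2 = S$2$1 * z$1 + S$2$2 * z$2"
  by (simp_all add: matrix_vector_mult_def sum_2)

lemma radius:
  fixes hb R :: real and f :: "real \<Rightarrow> complex"
  assumes hb: "hb > 0" and bd: "bounded (nodal_set (wigner hb f))" and ctr: "centered_at hb f 0"
    and R: "R > 0" and van: "\<forall>z::real^2. norm z = R \<longrightarrow> wigner hb f z = 0"
  shows "\<exists>n k. n \<ge> 1 \<and> gen_laguerre n k (2 * R^2 / hb) = 0"
proof -
  obtain N b S where detS: "det (S::real^2^2) = 1" and W: "\<And>z. wigner hb f z = (\<Sum>n\<le>N. \<Sum>m\<le>N. b n * cnj (b m) *
                 cross_wigner hb (hermite_fun hb n) (hermite_fun hb m) (S *v (z - 0)))"
    using ctr unfolding centered_at_def by blast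
  define B where "B n m = (if n \<le> N \<and> m \<le> N then b n * cnj (b m) * complex_of_real (CC hb n m) else 0)" for n m
  define Z where "Z z = Complex ((S *v z)$1 / sqrt hb) ((S *v z)$2 / sqrt hb)" for z
  define E where "E z = exp (- (((S *v z)$1 / sqrt hb)^2 + ((S *v z)$2 / sqrt hb)^2))" for z
  have W2: "wigner hb f z = complex_of_real (E z) * (\<Sum>n\<le>N. \<Sum>m\<le>N. B n m * aa n m (Z z) (cnj (Z z)))" for z
  proof -
    have "wigner hb f z = (\<Sum>n\<le>N. \<Sum>m\<le>N. complex_of_real (E z) * (B n m * aa n m (Z z) (cnj (Z z))))"
      unfolding W cross_wigner_hermite[OF hb]
      by (intro sum.cong refl) (simp add: B_def Z_def E_def complex_cnj)
    then show ?thesis by (simp add: sum_distrib_left)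
  qed
  have Epos: "E z > 0" for z unfolding E_def by simp
  define I where "I = {n. n \<le> N \<and> b n \<noteq> 0}"
  have finI: "finite I" unfolding I_def by simp
  have neI: "I \<noteq> {}"
  proof
    assume "I = {}"
    then have "\<And>n. n \<le> N \<Longrightarrow> b n = 0" unfolding I_def by auto
    then have "\<And>n m. B n m = 0" unfolding B_def by auto
    then have "\<And>z. wigner hb f z = 0" unfolding W2 by simp
    then have "nodal_set (wigner hb f) = UNIV" unfolding nodal_set_def by auto
    then show False using bd by simp
  qed
  define M where "M = Max I"
  define n0 where "n0 = Min I"
  have MI: "M \<in> I" and n0I: "n0 \<in> I" unfolding M_def n0_def using finI neI by auto
  have bnd: "n \<in> I \<Longrightarrow> n0 \<le> n \<and> n \<le> M" for n unfolding M_def n0_def using finI by auto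
  have hBI: "B n m \<noteq> 0 \<Longrightarrow> n \<in> I \<and> m \<in> I" for n m unfolding B_def I_def by (auto split: if_splits)
  have MN: "M \<le> N" and n0N: "n0 \<le> N" using MI n0I unfolding I_def by auto
  have n0M: "n0 \<le> M" using bnd[OF MI] by simp
  have Bnz: "n \<in> I \<Longrightarrow> m \<in> I \<Longrightarrow> B n m \<noteq> 0" for n m
    unfolding B_def I_def using CC_pos[OF hb, of n m] by auto
  define k0 where "k0 = R / (2 * sqrt hb)"
  define al where "al = complex_of_real k0 * Complex (S$1$1 + S$2$2) (S$2$1 - S$1$2)"
  define be where "be = complex_of_real k0 * Complex (S$1$1 - S$2$2) (S$2$1 + S$1$2)"
  have Zw: "Z (vector [R * Re w, R * Im w]) = al * w + be * cnj w" for w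
  proof -
    have s: "sqrt hb > 0" using hb by simp
    show ?thesis unfolding Z_def al_def be_def k0_def mv2 vector_2
      using s by (simp add: complex_eq_iff field_simps)
  qed
  have circ: "Psi B al be N w = 0" if w: "cmod w = 1" for w
  proof -
    define z where "z = (vector [R * Re w, R * Im w] :: real^2)"
    have "norm z = R"
    proof -
      have "norm z = sqrt (R^2 * ((Re w)^2 + (Im w)^2))" unfolding z_def norm_vec2 by (simp add: power_mult_distrib algebra_simps)
      also have "\<dots> = R * cmod w" using R by (simp add: real_sqrt_mult cmod_def)
      finally show ?thesis using w by simp
    qed
    then have "wigner hb f z = 0" using van by blast
    then have "(\<Sum>n\<le>N. \<Sum>m\<le>N. B n m * aa n m (Z z) (cnj (Z z))) = 0"
      unfolding W2 using Epos[of z] by simp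
    moreover have "Z z = al * w + be / w" and "cnj (Z z) = cnj al / w + cnj be * w"
    proof -
      have wc: "cnj w = 1 / w" using w by (simp add: complex_div_cnj[of 1 w] complex_norm_square[symmetric]) 
      show "Z z = al * w + be / w" unfolding z_def Zw wc by simp
      have "cnj (Z z) = cnj al * cnj w + cnj be * w" unfolding z_def Zw by simp
      then show "cnj (Z z) = cnj al / w + cnj be * w" unfolding wc by simp
    qed
    ultimately show ?thesis unfolding Psi_def by simp
  qed
  have Psi0: "Psi B al be N (of_real t) = 0" if "t > 0" for t
    by (rule Psi_zero[OF circ]) (use that in auto)
  have "((\<lambda>t. Psi B al be N (of_real t) / of_real t ^ (2*M)) \<longlongrightarrow> B M M * (4^M * (al * cnj be)^M)) at_top"
    by (rule lim_Psi5) (use hBI bnd MN in auto)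
  moreover have "((\<lambda>t. Psi B al be N (of_real t) / of_real t ^ (2*M)) \<longlongrightarrow> 0) at_top"
    by (rule tendsto_eventually) (use eventually_gt_at_top[of "0::real"] in \<open>eventually_elim, simp add: Psi0\<close>)
  ultimately have "B M M * (4^M * (al * cnj be)^M) = 0" by (rule tendsto_unique[OF trivial_limit_at_top_linorder])
  then have albe: "al * cnj be = 0" using Bnz[OF MI MI] by (auto simp: power_eq_0_iff)
  have "(cmod al)^2 - (cmod be)^2 = k0^2 * 4 * det S"
    unfolding al_def be_def det_2 cmod_power2 by (simp add: algebra_simps power2_eq_square)
  also have "\<dots> = R^2 / hb" unfolding detS k0_def using hb by (simp add: power_divide power_mult_distrib)
  finally have nd: "(cmod al)^2 - (cmod be)^2 = R^2 / hb" .
  have "R^2 / hb > 0" using R hb by simp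
  then have "al \<noteq> 0"
  proof (intro notI)
    assume pos: "R^2 / hb > 0" and "al = 0"
    then have "0 < - ((cmod be)^2)" using nd by simp
    moreover have "(cmod be)^2 \<ge> 0" by simp
    ultimately show False by linarith
  qed
  then have be0: "be = 0" using albe by simp
  have alsq: "(cmod al)^2 = R^2 / hb" using nd be0 by simp
  have Psi0': "Psi B al 0 N (of_real t) = 0" if "t > 0" for t using Psi0[OF that] be0 by simp
  have "((\<lambda>t. Psi B al 0 N (of_real t) / of_real t ^ (M - n0)) \<longlongrightarrow> B n0 M * aa n0 M al (cnj al)) at_top"
    by (rule lim_Psi6) (use hBI bnd MN n0N n0M in auto)
  moreover have "((\<lambda>t. Psi B al 0 N (of_real t) / of_real t ^ (M - n0)) \<longlongrightarrow> 0) at_top"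
    by (rule tendsto_eventually) (use eventually_gt_at_top[of "0::real"] in \<open>eventually_elim, simp add: Psi0'\<close>)
  ultimately have "B n0 M * aa n0 M al (cnj al) = 0" by (rule tendsto_unique[OF trivial_limit_at_top_linorder])
  then have aa0: "aa n0 M al (cnj al) = 0" using Bnz[OF n0I MI] by simp
  define k where "k = M - n0"
  have Mk: "M = n0 + k" unfolding k_def using n0M by simp
  have "al^k * complex_of_real ((-2)^n0 * 2^k * fact n0 * gen_laguerre n0 k (2 * (cmod al)^2)) = 0"
    using aa0 unfolding Mk aa_laguerre .
  then have "complex_of_real ((-2)^n0 * 2^k * fact n0 * gen_laguerre n0 k (2 * (cmod al)^2)) = 0"
    using \<open>al \<noteq> 0\<close> by simp
  then have "(-2)^n0 * 2^k * fact n0 * gen_laguerre n0 k (2 * (cmod al)^2) = 0" by (simp only: of_real_eq_0_iff)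
  then have "gen_laguerre n0 k (2 * (cmod al)^2) = 0" by simp
  then have L0: "gen_laguerre n0 k (2 * R^2 / hb) = 0" unfolding alsq by simp
  have "n0 \<ge> 1"
  proof (rule ccontr)
    assume "\<not> n0 \<ge> 1"
    then have "n0 = 0" by simp
    then show False using L0 gen_laguerre_0 by simp
  qed
  then show ?thesis using L0 by blast
qed


theorem theorem6:
  fixes hb :: real
  assumes "hb > 0"
  shows "(\<forall>(f::real \<Rightarrow> complex) (R::real).
            square_integrable f \<and> bounded (nodal_set (wigner hb f)) \<and> centered_at hb f 0
            \<and> R > 0 \<and> (\<forall>z::real^2. norm z = R \<longrightarrow> wigner hb f z = 0)
          \<longrightarrow> (\<exists>(n::nat) (k::nat) (p::real). n \<ge> 1 \<and> gen_laguerre n k p = 0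
                 \<and> R = sqrt (hb * p / 2)))
       \<and> countable {R::real. R > 0 \<and> (\<exists>f::real \<Rightarrow> complex.
            square_integrable f \<and> bounded (nodal_set (wigner hb f)) \<and> centered_at hb f 0
            \<and> (\<forall>z::real^2. norm z = R \<longrightarrow> wigner hb f z = 0))}"
proof -
  have sq: "R = sqrt (hb * (2 * R^2 / hb) / 2)" if "R > 0" for R :: real
    using assms that by simp
  have part1: "\<exists>(n::nat) (k::nat). n \<ge> 1 \<and> gen_laguerre n k (2 * R^2 / hb) = 0"
    if "bounded (nodal_set (wigner hb f))" "centered_at hb f 0" "R > 0"
       "\<forall>z::real^2. norm z = R \<longrightarrow> wigner hb f z = 0" for f R
    by (rule radius[OF assms that])
  show ?thesis
  proof (intro conjI allI impI)
    fix f R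
    assume h: "square_integrable f \<and> bounded (nodal_set (wigner hb f)) \<and> centered_at hb f 0
            \<and> R > 0 \<and> (\<forall>z::real^2. norm z = R \<longrightarrow> wigner hb f z = 0)"
    then obtain n k where "n \<ge> 1" "gen_laguerre n k (2 * R^2 / hb) = 0" using part1 by blast
    then show "\<exists>(n::nat) (k::nat) (p::real). n \<ge> 1 \<and> gen_laguerre n k p = 0 \<and> R = sqrt (hb * p / 2)"
      using sq h by blast
  next
    let ?A = "{R::real. R > 0 \<and> (\<exists>f::real \<Rightarrow> complex.
            square_integrable f \<and> bounded (nodal_set (wigner hb f)) \<and> centered_at hb f 0
            \<and> (\<forall>z::real^2. norm z = R \<longrightarrow> wigner hb f z = 0))}"
    have "?A \<subseteq> (\<lambda>p. sqrt (hb * p / 2)) ` (\<Union>nk\<in>UNIV. {p. gen_laguerre (fst nk) (snd nk) p = 0})"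
    proof
      fix R assume "R \<in> ?A"
      then obtain f where "R > 0" "bounded (nodal_set (wigner hb f))" "centered_at hb f 0"
        "\<forall>z::real^2. norm z = R \<longrightarrow> wigner hb f z = 0" by blast
      then obtain n k where "gen_laguerre n k (2 * R^2 / hb) = 0" using part1 by blast
      then show "R \<in> (\<lambda>p. sqrt (hb * p / 2)) ` (\<Union>nk\<in>UNIV. {p. gen_laguerre (fst nk) (snd nk) p = 0})"
        using sq[OF \<open>R > 0\<close>] by (intro image_eqI[where x="2 * R^2 / hb"]) auto
    qed
    moreover have "countable ((\<lambda>p. sqrt (hb * p / 2)) ` (\<Union>nk\<in>UNIV. {p. gen_laguerre (fst nk) (snd nk) p = 0}))"
      by (rule countable_image, rule countable_UN) (auto intro: countable_finite gen_laguerre_roots_finite)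
    ultimately show "countable ?A" by (rule countable_subset)
  qed
qed

end
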